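(* Let $X$ be the set of continuous functions $f:[1,\infty)\to\mathbb{R}$ such that $f(x)\ge x$ for all $1\le x<2$, and $(y+1)f(y)+f(x)\ge (y+1)x$ for all $x\ge 2$ and all $1\le y\le x$. For a real number $c$, let $f_c(x)=x^c$ on $[1,\infty)$. Then $f_c\in X$ if and only if $c\ge \frac{1+\sqrt5}{2}$. In particular, $X$ is nonempty. *)

theory Defs
  imports "HOL-Analysis.Analysis"
begin

text \<open>Functions on [1,\<infinity>) are represented as total functions real \<Rightarrow> real;
  only their values on {1..} matter.\<close>
definition X :: "(real \<Rightarrow> real) set" where
  "X = {f. continuous_on {1..} f
         \<and> (\<forall>x. 1 \<le> x \<and> x < 2 \<longrightarrow> f x \<ge> x)
         \<and> (\<forall>x y. x \<ge> 2 \<and> 1 \<le> y \<and> y \<le> x \<longrightarrow> (y + 1) * f y + f x \<ge> (y + 1) * x)}"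

definition fc :: "real \<Rightarrow> real \<Rightarrow> real" where
  "fc c = (\<lambda>x. x powr c)"

end

theory Submission
  imports Defs
begin

lemma cubic_nonneg:
  fixes t :: real assumes "0 \<le> t" "t \<le> 1" shows "0 \<le> 1 - 2*t + 2*t^3"
proof -
  have e: "1 - 2*t + 2*t^3 = 2*(t-1/2)^2*(t+1) + (1-t)/2" by (simp add: field_simps power2_eq_square power3_eq_cube)
  have "0 \<le> 2*(t-1/2)^2*(t+1)" using assms by simp
  thus ?thesis unfolding e using assms by (intro add_nonneg_nonneg) auto
qed

lemma phi_facts:
  defines "c \<equiv> (1 + sqrt 5) / 2"
  shows "c * c = c + 1" "1 < c" "c \<le> 2"
proof -
  have s: "sqrt 5 * sqrt 5 = 5" by simp
  show "c * c = c + 1" unfolding c_def using s by (simp add: field_simps)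
  have "2 < sqrt 5" by (simp add: real_less_rsqrt)
  thus "1 < c" unfolding c_def by simp
  have "sqrt 5 \<le> 3" by (simp add: real_sqrt_le_iff[of 5 9, simplified] )
  thus "c \<le> 2" unfolding c_def by simp
qed

lemma key_phi:
  fixes x y :: real
  defines "c \<equiv> (1 + sqrt 5) / 2"
  assumes x2: "x \<ge> 2" and y1: "1 \<le> y" and yx: "y \<le> x"
  shows "(y + 1) * y powr c + x powr c \<ge> (y + 1) * x"
proof (cases "x \<le> y powr c")
  case True
  have "(y+1) * x \<le> (y+1) * y powr c" using True y1 by (intro mult_left_mono) auto
  moreover have "0 \<le> x powr c" by simp
  ultimately show ?thesis by linarith
next
  case False
  let ?w = "y powr c"
  have cc: "c * c = c + 1" and c1: "1 < c" and c2: "c \<le> 2" using phi_facts unfolding c_def by auto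
  define u where "u = x powr (1/c)"
  have xpos: "0 < x" using x2 by simp
  have upos: "0 < u" unfolding u_def using xpos by simp
  have uc: "u powr c = x" unfolding u_def using xpos c1 by (simp add: powr_powr)
  have "c = 1 + 1/c" using cc c1 by (simp add: field_simps)
  hence "x powr c = x powr (1 + 1/c)" by metis
  also have "\<dots> = x * u" unfolding u_def using xpos by (simp add: powr_add)
  finally have xc: "x powr c = x * u" .
  have yu: "y \<le> u"
  proof (rule ccontr)
    assume "\<not> y \<le> u"
    hence "u powr c < y powr c" using upos c1 by (intro powr_less_mono2) auto
    thus False using False uc by simp
  qed
  define t where "t = y / u"
  have t0: "0 < t" and t1: "t \<le> 1" unfolding t_def using upos y1 yu by auto
  have "t powr 3 \<le> t powr (c+1)" using t0 t1 c2 by (intro powr_mono') auto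
  hence t3: "t^3 \<le> t powr (c+1)" using t0 by (simp add: powr_numeral)
  have ytu: "y = t * u" unfolding t_def using upos by simp
  have "y powr (c+1) = t powr (c+1) * u powr (c+1)" using ytu t0 upos by (simp add: powr_mult)
  also have "u powr (c+1) = x * u" using uc upos by (simp add: powr_add)
  finally have yc1: "y powr (c+1) = t powr (c+1) * (x*u)" .
  have P: "y powr (c+1) = y * ?w" using y1 by (simp add: powr_add)
  have xu0: "0 \<le> x*u" using xpos upos by simp
  have "t^3 * (x*u) \<le> y * ?w" using mult_right_mono[OF t3 xu0] yc1 P by simp
  have K0: "0 \<le> (x*u) * (1 - 2*t + 2*t^3)" using cubic_nonneg[of t] t0 t1 xu0 by simp
  have "(x*u) * (1 - 2*t + 2*t^3) = x*u - 2*x*y + 2*(t^3*(x*u))" using ytu by (simp add: algebra_simps)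
  hence K: "0 \<le> x*u - 2*(x*y) + 2*(y*?w)" using K0 \<open>t^3 * (x*u) \<le> y * ?w\<close> by linarith
  have h1: "x - ?w \<le> y * (x - ?w)" using False y1 by (simp add: mult_le_cancel_right1)
  have "(y+1)*x \<le> (y+1)*?w + x*u" using h1 K by (simp add: algebra_simps)
  thus ?thesis using xc by simp
qed

lemma suff:
  assumes c: "c \<ge> (1 + sqrt 5) / 2"
  shows "fc c \<in> X"
proof -
  define p where "p = (1 + sqrt 5) / 2"
  have p1: "1 < p" using phi_facts unfolding p_def by auto
  have cp: "p \<le> c" using c unfolding p_def by simp
  have cont: "continuous_on {1..} (fc c)" unfolding fc_def
    by (intro continuous_on_powr continuous_intros) auto
  have A: "x \<le> fc c x" if "1 \<le> x" for x
  proof -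
    have "x powr 1 \<le> x powr c" using that p1 cp by (intro powr_mono) auto
    thus ?thesis using that by (simp add: fc_def)
  qed
  have B: "(y + 1) * fc c y + fc c x \<ge> (y + 1) * x" if "x \<ge> 2" "1 \<le> y" "y \<le> x" for x y
  proof -
    have "(y + 1) * y powr p + x powr p \<ge> (y + 1) * x" using key_phi[OF that] unfolding p_def .
    moreover have "y powr p \<le> y powr c" using that cp by (intro powr_mono) auto
    hence "(y+1) * y powr p \<le> (y+1) * y powr c" using that by (intro mult_left_mono) auto
    moreover have "x powr p \<le> x powr c" using that cp by (intro powr_mono) auto
    ultimately have "(y + 1) * y powr c + x powr c \<ge> (y + 1) * x" by linarith
    thus ?thesis by (simp add: fc_def)
  qed
  show ?thesis unfolding X_def using cont A B by auto
qed

lemma nec: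
  assumes c: "c < (1 + sqrt 5) / 2"
  shows "fc c \<notin> X"
proof (cases "c < 1")
  case True
  have "(3/2::real) powr c < (3/2) powr 1" using True by (intro powr_less_mono) auto
  hence "fc c (3/2) < 3/2" by (simp add: fc_def)
  show ?thesis
  proof
    assume "fc c \<in> X"
    hence "\<forall>x. 1 \<le> x \<and> x < 2 \<longrightarrow> fc c x \<ge> x" unfolding X_def by blast
    hence "1 \<le> (3/2::real) \<and> (3/2::real) < 2 \<longrightarrow> fc c (3/2) \<ge> 3/2" by (rule spec)
    hence "fc c (3/2) \<ge> 3/2" by simp
    thus False using \<open>fc c (3/2) < 3/2\<close> by simp
  qed
next
  case False
  hence c1: "1 \<le> c" by simp
  have "2*c - 1 < sqrt 5" using c by simp
  hence "(2*c-1)^2 < (sqrt 5)^2" using c1 by (intro power_strict_mono) auto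
  hence "(2*c-1)^2 < 5" by simp
  hence epos: "0 < c + 1 - c*c" by (simp add: power2_eq_square algebra_simps)
  define e where "e = c + 1 - c*c"
  have e0: "0 < e" using epos e_def by simp
  define y where "y = (4::real) powr (1/e)"
  have ypos: "0 < y" unfolding y_def by simp
  have y1: "1 \<le> y" unfolding y_def using e0 by (simp add: ge_one_powr_ge_zero)
  have ye: "y powr e = 4" unfolding y_def using e0 by (simp add: powr_powr)
  define x where "x = 2 * y powr c"
  have yc1: "1 \<le> y powr c" using y1 c1 by (simp add: ge_one_powr_ge_zero)
  have x2: "2 \<le> x" unfolding x_def using yc1 by simp
  have "y powr 1 \<le> y powr c" using y1 c1 by (intro powr_mono) auto
  hence yx: "y \<le> x" unfolding x_def using yc1 ypos by simp
  have c2: "c < 2" using phi_facts(3) c by linarith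
  have "(2::real) powr c < 2 powr 2" using c2 by (intro powr_less_mono) auto
  hence p2c: "(2::real) powr c < 4" by simp
  have xc: "x powr c = 2 powr c * y powr (c*c)" unfolding x_def using ypos
    by (simp add: powr_mult powr_powr)
  have "y powr (c+1) = y powr e * y powr (c*c)" unfolding e_def using ypos
    by (simp add: powr_add[symmetric])
  hence yc1': "y * y powr c = 4 * y powr (c*c)" using ye ypos by (simp add: powr_add mult.commute)
  have ycc: "0 < y powr (c*c)" using ypos by simp
  have "2 powr c * y powr (c*c) < 4 * y powr (c*c)" using p2c ycc by simp
  hence "x powr c < y * y powr c" using xc yc1' by simp
  hence "(y + 1) * y powr c + x powr c < (y + 1) * x"
    unfolding x_def using yc1 by (simp add: algebra_simps)
  hence "\<not> ((y + 1) * fc c y + fc c x \<ge> (y + 1) * x)" by (simp add: fc_def)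
  show ?thesis
  proof
    assume "fc c \<in> X"
    hence "\<forall>x y. x \<ge> 2 \<and> 1 \<le> y \<and> y \<le> x \<longrightarrow> (y + 1) * fc c y + fc c x \<ge> (y + 1) * x"
      unfolding X_def by blast
    thus False using x2 y1 yx \<open>\<not> ((y + 1) * fc c y + fc c x \<ge> (y + 1) * x)\<close> by blast
  qed
qed

theorem mainTheorem1:
  shows "(\<forall>c::real. fc c \<in> X \<longleftrightarrow> c \<ge> (1 + sqrt 5) / 2) \<and> X \<noteq> {}"
proof
  show "\<forall>c::real. fc c \<in> X \<longleftrightarrow> c \<ge> (1 + sqrt 5) / 2" using suff nec by (meson not_le)
  have "fc ((1 + sqrt 5) / 2) \<in> X" by (rule suff) simp
  thus "X \<noteq> {}" by blast
qed

end
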